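(* Let $f:\mathbb{X}(N,k)\to\mathbb{R}$ be a monotone $k$-submodular function, let $\hat{\mathbf{x}}\in\mathcal{X}$, and let $\hat{\mathbf{S}}=(\hat S_1,\dots,\hat S_k)$ be an optimal solution of the defender's problem defining $\Phi_D(\hat{\mathbf{x}})$, so that $\Phi_D(\hat{\mathbf{x}})=f(\hat{\mathbf{S}})$. Then for every $\mathbf{x}\in\mathcal{X}$, $$\Phi_D(\mathbf{x})\;\ge\;\Phi_D(\hat{\mathbf{x}})-\sum_{q=1}^k\sum_{i\in\hat S_q}\rho_{q,i}(\boldsymbol{\emptyset})\,x_{q,i}.$$
   Context: Let $n,k$ be positive integers and $N=\{1,\dots,n\}$. $\mathbb{X}(N,k)$ denotes the set of $k$-tuples $\mathbf{S}=(S_1,\dots,S_k)$ of pairwise disjoint subsets of $N$; such a tuple is identified with $\mathbf{s}\in\{0,1\}^{kn}$ where $s_{q,i}=1$ iff $i\in S_q$. For $\mathbf{X},\mathbf{Y}\in\mathbb{X}(N,k)$ let $\mathbf{X}\sqcap\mathbf{Y}=(X_1\cap Y_1,\dots,X_k\cap Y_k)$ and $\mathbf{X}\sqcup\mathbf{Y}$ be the tuple whose $i$-th component is $(X_i\cup Y_i)\setminus\bigcup_{q\ne i}(X_q\cup Y_q)$. A function $f:\mathbb{X}(N,k)\to\mathbb{R}$ is $k$-submodular if $f(\mathbf{X})+f(\mathbf{Y})\ge f(\mathbf{X}\sqcap\mathbf{Y})+f(\mathbf{X}\sqcup\mathbf{Y})$ for all $\mathbf{X},\mathbf{Y}$, and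 monotone if $f(\mathbf{X})\le f(\mathbf{Y})$ whenever $X_q\subseteq Y_q$ for all $q$. $\boldsymbol{\emptyset}=(\emptyset,\dots,\emptyset)$. For $\mathbf{X}\in\mathbb{X}(N,k)$, $q\in\{1,\dots,k\}$ and $i\in N\setminus\bigcup_r X_r$, the marginal gain is $\rho_{q,i}(\mathbf{X})=f(X_1,\dots,X_{q-1},X_q\cup\{i\},X_{q+1},\dots,X_k)-f(\mathbf{X})$. Given nonnegative integer budgets $A_1,\dots,A_k$ and $D_1,\dots,D_k$, the attacker's feasible set is $\mathcal{X}=\{\mathbf{x}\in\{0,1\}^{kn}:\sum_{i=1}^n x_{q,i}\le A_q\ \forall q,\ \sum_{q=1}^k x_{q,i}\le 1\ \forall i\in N\}$, and $\Phi_D(\mathbf{x})=\max\{f(\mathbf{S}):\mathbf{S}\in\mathbb{X}(N,k),\ s_{q,i}\le 1-x_{q,i}\ \forall q,i,\ \sum_{i=1}^n s_{q,i}\le D_q\ \forall q\}$. *)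

theory Defs
  imports Complex_Main
begin

text \<open>A k-tuple (S_1,...,S_k) of pairwise disjoint subsets of N = {1..n} is represented
  as a function S :: nat => nat set, with S q the q-th component for q in {1..k}
  and S q = {} for q outside {1..k} (canonical representative).\<close>

definition kset :: "nat \<Rightarrow> nat \<Rightarrow> (nat \<Rightarrow> nat set) \<Rightarrow> bool" where
  "kset n k S \<longleftrightarrow> (\<forall>q. S q \<subseteq> {1..n}) \<and> (\<forall>q. q \<notin> {1..k} \<longrightarrow> S q = {}) \<and>
     (\<forall>q\<in>{1..k}. \<forall>r\<in>{1..k}. q \<noteq> r \<longrightarrow> S q \<inter> S r = {})"

definition kmeet :: "(nat \<Rightarrow> nat set) \<Rightarrow> (nat \<Rightarrow> nat set) \<Rightarrow> (nat \<Rightarrow> nat set)" where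
  "kmeet X Y = (\<lambda>q. X q \<inter> Y q)"

definition kjoin :: "nat \<Rightarrow> (nat \<Rightarrow> nat set) \<Rightarrow> (nat \<Rightarrow> nat set) \<Rightarrow> (nat \<Rightarrow> nat set)" where
  "kjoin k X Y = (\<lambda>q. if q \<in> {1..k}
      then (X q \<union> Y q) - (\<Union>r\<in>{1..k} - {q}. X r \<union> Y r) else {})"

definition k_submodular :: "nat \<Rightarrow> nat \<Rightarrow> ((nat \<Rightarrow> nat set) \<Rightarrow> real) \<Rightarrow> bool" where
  "k_submodular n k f \<longleftrightarrow> (\<forall>X Y. kset n k X \<longrightarrow> kset n k Y \<longrightarrow>
      f X + f Y \<ge> f (kmeet X Y) + f (kjoin k X Y))"

definition k_monotone :: "nat \<Rightarrow> nat \<Rightarrow> ((nat \<Rightarrow> nat set) \<Rightarrow> real) \<Rightarrow> bool" where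
  "k_monotone n k f \<longleftrightarrow> (\<forall>X Y. kset n k X \<longrightarrow> kset n k Y \<longrightarrow>
      (\<forall>q\<in>{1..k}. X q \<subseteq> Y q) \<longrightarrow> f X \<le> f Y)"

definition kempty :: "nat \<Rightarrow> nat set" where
  "kempty = (\<lambda>q. {})"

definition rho :: "((nat \<Rightarrow> nat set) \<Rightarrow> real) \<Rightarrow> nat \<Rightarrow> nat \<Rightarrow> (nat \<Rightarrow> nat set) \<Rightarrow> real" where
  "rho f q i X = f (X(q := X q \<union> {i})) - f X"

definition attacker_feasible :: "nat \<Rightarrow> nat \<Rightarrow> (nat \<Rightarrow> nat) \<Rightarrow> (nat \<Rightarrow> nat \<Rightarrow> nat) \<Rightarrow> bool" where
  "attacker_feasible n k A x \<longleftrightarrow> (\<forall>q i. x q i \<in> {0,1}) \<and>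
     (\<forall>q i. q \<notin> {1..k} \<or> i \<notin> {1..n} \<longrightarrow> x q i = 0) \<and>
     (\<forall>q\<in>{1..k}. (\<Sum>i=1..n. x q i) \<le> A q) \<and>
     (\<forall>i\<in>{1..n}. (\<Sum>q=1..k. x q i) \<le> 1)"

definition defender_feasible :: "nat \<Rightarrow> nat \<Rightarrow> (nat \<Rightarrow> nat) \<Rightarrow> (nat \<Rightarrow> nat \<Rightarrow> nat)
    \<Rightarrow> (nat \<Rightarrow> nat set) \<Rightarrow> bool" where
  "defender_feasible n k D x S \<longleftrightarrow> kset n k S \<and>
     (\<forall>q\<in>{1..k}. \<forall>i\<in>{1..n}. (if i \<in> S q then 1 else 0) \<le> 1 - int (x q i)) \<and>
     (\<forall>q\<in>{1..k}. card (S q) \<le> D q)"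

definition Phi_D :: "nat \<Rightarrow> nat \<Rightarrow> (nat \<Rightarrow> nat) \<Rightarrow> ((nat \<Rightarrow> nat set) \<Rightarrow> real)
    \<Rightarrow> (nat \<Rightarrow> nat \<Rightarrow> nat) \<Rightarrow> real" where
  "Phi_D n k D f x = Max (f ` {S. defender_feasible n k D x S})"

end

theory Submission
  imports Defs "HOL-Library.FuncSet"
begin

lemma kset_single:
  assumes "q \<in> {1..k}" "i \<in> {1..n}"
  shows "kset n k (kempty(q := {i}))"
  using assms unfolding kset_def kempty_def by auto

lemma key:
  assumes sub: "k_submodular n k f" and S: "kset n k S"
    and q: "q \<in> {1..k}" and i: "i \<in> {1..n}" and nin: "\<forall>r. i \<notin> S r"
  shows "f (S(q := S q \<union> {i})) - f S \<le> rho f q i kempty"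
proof -
  let ?Y = "kempty(q := {i})"
  have Y: "kset n k ?Y" using kset_single[OF q i] .
  have m: "kmeet S ?Y = kempty" using nin unfolding kmeet_def kempty_def by (auto simp: fun_eq_iff)
  have j: "kjoin k S ?Y = S(q := S q \<union> {i})"
  proof
    fix r
    show "kjoin k S ?Y r = (S(q := S q \<union> {i})) r"
    proof (cases "r \<in> {1..k}")
      case False
      then show ?thesis using S q unfolding kjoin_def kset_def by auto
    next
      case True
      have d: "\<And>r' y. r' \<in> {1..k} \<Longrightarrow> r' \<noteq> r \<Longrightarrow> y \<in> S r \<Longrightarrow> y \<notin> S r'"
        using S True unfolding kset_def by blast
      show ?thesis
      proof (cases "r = q")
        case True
        then show ?thesis using d q nin unfolding kjoin_def kempty_def by (auto; blast)
      next
        case False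
        then show ?thesis using d q nin \<open>r \<in> {1..k}\<close> unfolding kjoin_def kempty_def
          by (auto split: if_splits; metis atLeastAtMost_iff)
      qed
    qed
  qed
  have "f S + f ?Y \<ge> f (kmeet S ?Y) + f (kjoin k S ?Y)"
    using sub S Y unfolding k_submodular_def by blast
  then show ?thesis unfolding m j rho_def by (simp add: kempty_def)
qed

lemma telescope:
  assumes sub: "k_submodular n k f" and fin: "finite P"
  shows "\<And>S. kset n k S \<Longrightarrow> P \<subseteq> {(q,i). q \<in> {1..k} \<and> i \<in> S q} \<Longrightarrow>
     f S - f (\<lambda>q. S q - {i. (q,i) \<in> P}) \<le> (\<Sum>(q,i)\<in>P. rho f q i kempty)"
  using fin
proof (induction P rule: finite_induct)
  case empty
  then show ?case by simp
next
  case (insert a P S)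
  obtain q0 i0 where a: "a = (q0, i0)" by (cases a)
  have q0: "q0 \<in> {1..k}" and i0S: "i0 \<in> S q0" using insert.prems a by auto
  have i0: "i0 \<in> {1..n}" using insert.prems(1) i0S unfolding kset_def by blast
  define S' where "S' = S(q0 := S q0 - {i0})"
  have S': "kset n k S'"
  proof -
    have "\<forall>q. S' q \<subseteq> S q" unfolding S'_def by auto
    then show ?thesis using insert.prems(1) unfolding kset_def by blast
  qed
  have P': "P \<subseteq> {(q,i). q \<in> {1..k} \<and> i \<in> S' q}"
    using insert.prems(2) insert.hyps(2) a unfolding S'_def by auto
  have IH: "f S' - f (\<lambda>q. S' q - {i. (q,i) \<in> P}) \<le> (\<Sum>(q,i)\<in>P. rho f q i kempty)"
    using insert.IH[OF S' P'] .
  have eq1: "(\<lambda>q. S' q - {i. (q,i) \<in> P}) = (\<lambda>q. S q - {i. (q,i) \<in> insert a P})"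
    unfolding S'_def a by (auto simp: fun_eq_iff)
  have nin: "\<forall>r. i0 \<notin> S' r"
  proof
    fix r
    show "i0 \<notin> S' r"
    proof (cases "r = q0")
      case True then show ?thesis unfolding S'_def by auto
    next
      case False
      show ?thesis
      proof (cases "r \<in> {1..k}")
        case True
        then have "S q0 \<inter> S r = {}" using insert.prems(1) q0 False unfolding kset_def by blast
        then show ?thesis using i0S False unfolding S'_def by auto
      next
        case F2: False
        then show ?thesis using insert.prems(1) False unfolding S'_def kset_def by auto
      qed
    qed
  qed
  have eq2: "S = S'(q0 := S' q0 \<union> {i0})" using i0S unfolding S'_def by (auto simp: fun_eq_iff)
  have K: "f S - f S' \<le> rho f q0 i0 kempty"
    using key[OF sub S' q0 i0 nin] eq2 by simp
  have "(\<Sum>(q,i)\<in>insert a P. rho f q i kempty) = rho f q0 i0 kempty + (\<Sum>(q,i)\<in>P. rho f q i kempty)"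
    using insert.hyps a by simp
  then show ?case using IH K eq1 by simp
qed

theorem theorem1:
  fixes n k :: nat and A D :: "nat \<Rightarrow> nat" and f :: "(nat \<Rightarrow> nat set) \<Rightarrow> real"
    and xh x :: "nat \<Rightarrow> nat \<Rightarrow> nat" and Sh :: "nat \<Rightarrow> nat set"
  assumes "0 < n" and "0 < k"
    and "k_submodular n k f" and "k_monotone n k f"
    and "attacker_feasible n k A xh"
    and "defender_feasible n k D xh Sh" and "Phi_D n k D f xh = f Sh"
    and "attacker_feasible n k A x"
  shows "Phi_D n k D f x \<ge>
    Phi_D n k D f xh - (\<Sum>q=1..k. \<Sum>i\<in>Sh q. rho f q i kempty * real (x q i))"
proof -
  have Sh: "kset n k Sh" using assms(6) unfolding defender_feasible_def by auto
  have x01: "\<And>q i. x q i \<in> {0,1}" using assms(8) unfolding attacker_feasible_def by auto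
  define P where "P = {(q,i). q \<in> {1..k} \<and> i \<in> Sh q \<and> x q i = 1}"
  have finP: "finite P"
    by (rule finite_subset[of _ "{1..k} \<times> {1..n}"]) (use Sh in \<open>auto simp: P_def kset_def\<close>)
  define T where "T = (\<lambda>q. Sh q - {i. (q,i) \<in> P})"
  have tel: "f Sh - f T \<le> (\<Sum>(q,i)\<in>P. rho f q i kempty)"
    using telescope[OF assms(3) finP Sh] unfolding T_def P_def by auto
  have finSh: "finite (Sh q)" for q using Sh unfolding kset_def
    by (meson finite_atLeastAtMost finite_subset)
  have sumeq: "(\<Sum>q=1..k. \<Sum>i\<in>Sh q. rho f q i kempty * real (x q i)) = (\<Sum>(q,i)\<in>P. rho f q i kempty)"
  proof -
    have "(\<Sum>q=1..k. \<Sum>i\<in>Sh q. rho f q i kempty * real (x q i))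
        = (\<Sum>(q,i)\<in>Sigma {1..k} Sh. rho f q i kempty * real (x q i))"
      by (rule sum.Sigma) (auto simp: finSh)
    also have "\<dots> = (\<Sum>(q,i)\<in>Sigma {1..k} Sh. if x q i = 1 then rho f q i kempty else 0)"
    proof (rule sum.cong)
      fix p assume "p \<in> Sigma {1..k} Sh"
      obtain q i where p: "p = (q,i)" by (cases p)
      show "(case p of (q, i) \<Rightarrow> rho f q i kempty * real (x q i)) =
        (case p of (q, i) \<Rightarrow> if x q i = 1 then rho f q i kempty else 0)"
        using x01[of q i] p by auto
    qed simp
    also have "\<dots> = (\<Sum>(q,i)\<in>{p\<in>Sigma {1..k} Sh. x (fst p) (snd p) = 1}. rho f q i kempty)"
      by (subst sum.inter_filter) (auto simp: finSh split_def intro!: sum.cong)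
    also have "{p\<in>Sigma {1..k} Sh. x (fst p) (snd p) = 1} = P" unfolding P_def by auto
    finally show ?thesis .
  qed
  have Tf: "defender_feasible n k D x T"
  proof -
    have kT: "kset n k T" using Sh unfolding kset_def T_def by blast
    have c: "\<forall>q\<in>{1..k}. card (T q) \<le> D q"
    proof
      fix q assume q: "q \<in> {1..k}"
      have "card (T q) \<le> card (Sh q)" unfolding T_def by (rule card_mono[OF finSh]) auto
      also have "\<dots> \<le> D q" using assms(6) q unfolding defender_feasible_def by auto
      finally show "card (T q) \<le> D q" .
    qed
    have "\<forall>q\<in>{1..k}. \<forall>i\<in>{1..n}. (if i \<in> T q then 1 else 0) \<le> 1 - int (x q i)"
    proof (intro ballI)
      fix q i assume "q \<in> {1..k}" "i \<in> {1..n}"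
      show "(if i \<in> T q then 1 else 0) \<le> 1 - int (x q i)"
        using x01[of q i] \<open>q \<in> {1..k}\<close> unfolding T_def P_def by auto
    qed
    then show ?thesis using kT c unfolding defender_feasible_def by blast
  qed
  have fin: "finite {S. defender_feasible n k D x S}"
  proof (rule finite_subset)
    show "{S. defender_feasible n k D x S} \<subseteq>
      (\<lambda>g q. if q \<in> {1..k} then g q else {}) ` (PiE {1..k} (\<lambda>_. Pow {1..n}))"
    proof
      fix S assume "S \<in> {S. defender_feasible n k D x S}"
      then have kS: "kset n k S" unfolding defender_feasible_def by auto
      have "S = (\<lambda>q. if q \<in> {1..k} then restrict S {1..k} q else {})"
        using kS unfolding kset_def by (auto simp: fun_eq_iff)
      moreover have "restrict S {1..k} \<in> PiE {1..k} (\<lambda>_. Pow {1..n})"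
        using kS unfolding kset_def by auto
      ultimately show "S \<in> (\<lambda>g q. if q \<in> {1..k} then g q else {}) ` (PiE {1..k} (\<lambda>_. Pow {1..n}))"
        by blast
    qed
    show "finite ((\<lambda>g q. if q \<in> {1..k} then g q else {}) ` (PiE {1..k} (\<lambda>_. Pow {1..n})))"
      by (intro finite_imageI finite_PiE) auto
  qed
  have "f T \<le> Phi_D n k D f x" unfolding Phi_D_def
    using fin Tf by (intro Max_ge) auto
  then show ?thesis using tel sumeq assms(7) by simp
qed

end
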